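(* Let $P\in S^n$. Then: (1) $\overline{\mathcal{H}_{\rm Wulff}(S^n,P)}\subset\mathcal{H}^\circ(S^n)$; (2) $\bigcirc(\mathcal{H}_{\rm Wulff}(S^n,P))=\mathcal{H}_{\rm Wulff}(S^n,P)$; (3) $\bigcirc(\overline{\mathcal{H}_{\rm Wulff}(S^n,P)})=\overline{\mathcal{H}_{\rm Wulff}(S^n,P)}$; (4) the restriction of $\bigcirc$ to $\overline{\mathcal{H}_{\rm Wulff}(S^n,P)}$ is injective. Here $\bigcirc(W)=W^\circ$.
   Context: $S^n$ is the unit sphere in $\mathbb{R}^{n+1}$, $n\ge1$; $|PQ|=\arccos(P\cdot Q)$. $H(P)=\{Q\in S^n:P\cdot Q\ge0\}$ and $W^\circ=\bigcap_{P\in W}H(P)$. $\mathcal{H}(S^n)$ is the set of non-empty closed subsets of $S^n$ with the Pompeiu-Hausdorff metric $h(A,B)=\max\{\max_{x\in A}\min_{y\in B}|xy|,\ \max_{y\in B}\min_{x\in A}|xy|\}$, and $\mathcal{H}^\circ(S^n)=\{W\in\mathcal{H}(S^n):W^\circ\ne\emptyset\}$. A subset is hemispherical if it is disjoint from $H(Q)$ for some $Q\in S^n$. For $A,B$ in a hemispherical set, the arc $AB=\{((1-t)A+tB)/\|(1-t)A+tB\|:0\le t\le1\}$; a hemispherical set $W$ is spherical convex if $AB\subset W$ for all $A,B\in W$, and a spherical convex body if moreover it is closed and has an interior point. $\mathcal{H}_{\rm Wulff}(S^n,P)$ is the set of $W\in\mathcal{H}(S^n)$ with $W\cap H(-P)=\emptyset$,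 $P$ an interior point of $W$, and $W$ a spherical convex body; $\overline{\mathcal{H}_{\rm Wulff}(S^n,P)}$ is its closure in $(\mathcal{H}(S^n),h)$. *)

theory Defs
  imports "HOL-Analysis.Analysis"
begin

text \<open>The unit sphere S^n in R^(n+1), modelled as the unit sphere of a Euclidean space 'a
  with DIM('a) = n+1.\<close>
definition sph :: "'a::euclidean_space set" where
  "sph = sphere 0 1"

definition sdist :: "'a::euclidean_space \<Rightarrow> 'a \<Rightarrow> real" where
  "sdist P Q = arccos (P \<bullet> Q)"

definition hemi :: "'a::euclidean_space \<Rightarrow> 'a set" where
  "hemi P = {Q \<in> sph. P \<bullet> Q \<ge> 0}"

definition spolar :: "'a::euclidean_space set \<Rightarrow> 'a set" where
  "spolar W = {Q \<in> sph. \<forall>P\<in>W. P \<bullet> Q \<ge> 0}"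

definition Hsets :: "'a::euclidean_space set set" where
  "Hsets = {W. W \<subseteq> sph \<and> W \<noteq> {} \<and> closed W}"

definition shd :: "'a::euclidean_space set \<Rightarrow> 'a set \<Rightarrow> real" where
  "shd A B = max (SUP x\<in>A. INF y\<in>B. sdist x y) (SUP y\<in>B. INF x\<in>A. sdist x y)"

definition Hcirc :: "'a::euclidean_space set set" where
  "Hcirc = {W \<in> Hsets. spolar W \<noteq> {}}"

definition hemispherical :: "'a::euclidean_space set \<Rightarrow> bool" where
  "hemispherical W \<longleftrightarrow> (\<exists>Q\<in>sph. W \<inter> hemi Q = {})"

definition sarc :: "'a::euclidean_space \<Rightarrow> 'a \<Rightarrow> 'a set" where
  "sarc A B = {((1 - t) *\<^sub>R A + t *\<^sub>R B) /\<^sub>R norm ((1 - t) *\<^sub>R A + t *\<^sub>R B) | t. 0 \<le> t \<and> t \<le> 1}"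

definition spherical_convex :: "'a::euclidean_space set \<Rightarrow> bool" where
  "spherical_convex W \<longleftrightarrow> W \<subseteq> sph \<and> hemispherical W \<and> (\<forall>A\<in>W. \<forall>B\<in>W. sarc A B \<subseteq> W)"

definition sinterior_point :: "'a::euclidean_space set \<Rightarrow> 'a \<Rightarrow> bool" where
  "sinterior_point W x \<longleftrightarrow> x \<in> W \<and> (\<exists>e>0. sph \<inter> ball x e \<subseteq> W)"

definition spherical_convex_body :: "'a::euclidean_space set \<Rightarrow> bool" where
  "spherical_convex_body W \<longleftrightarrow> spherical_convex W \<and> closed W \<and> (\<exists>x. sinterior_point W x)"

definition HWulff :: "'a::euclidean_space \<Rightarrow> 'a set set" where
  "HWulff P = {W \<in> Hsets. W \<inter> hemi (- P) = {} \<and> sinterior_point W P \<and> spherical_convex_body W}"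

definition HWulff_cl :: "'a::euclidean_space \<Rightarrow> 'a set set" where
  "HWulff_cl P = {W \<in> Hsets. \<forall>e>0. \<exists>V\<in>HWulff P. shd W V < e}"

end

theory Submission
  imports Defs
begin


lemma sph_iff: "x \<in> sph \<longleftrightarrow> norm x = 1" by (simp add: sph_def)

lemma sgn_sph: "(x::'a::euclidean_space) \<noteq> 0 \<Longrightarrow> sgn x \<in> sph"
  by (simp add: sph_iff norm_sgn)

lemma sgn_diff:
  fixes x y :: "'a::euclidean_space"
  assumes "x \<noteq> 0"
  shows "norm (sgn x - sgn y) \<le> 2 * norm (x - y) / norm x"
proof (cases "y = 0")
  case True
  then show ?thesis using assms by (simp add: norm_sgn)
next
  case False
  have nx: "norm x > 0" using assms by simp
  have ny: "norm y > 0" using False by simp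
  have coef: "inverse (norm x) = inverse (norm y) + (norm y - norm x) / (norm x * norm y)"
    using nx ny by (simp add: field_simps)
  have eq: "sgn x - sgn y = (x - y) /\<^sub>R norm x + ((norm y - norm x) / (norm x * norm y)) *\<^sub>R y"
  proof -
    have "(x - y) /\<^sub>R norm x + ((norm y - norm x) / (norm x * norm y)) *\<^sub>R y
        = inverse (norm x) *\<^sub>R x - (inverse (norm x) - (norm y - norm x) / (norm x * norm y)) *\<^sub>R y"
      by (simp add: scaleR_diff_right scaleR_diff_left)
    also have "inverse (norm x) - (norm y - norm x) / (norm x * norm y) = inverse (norm y)"
      using coef by simp
    finally show ?thesis by (simp add: sgn_div_norm)
  qed
  have "norm (sgn x - sgn y) \<le> norm ((x - y) /\<^sub>R norm x) + norm (((norm y - norm x) / (norm x * norm y)) *\<^sub>R y)"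
    unfolding eq by (rule norm_triangle_ineq)
  also have "norm ((x - y) /\<^sub>R norm x) = norm (x - y) / norm x" using nx by (simp add: divide_inverse mult.commute)
  also have "norm (((norm y - norm x) / (norm x * norm y)) *\<^sub>R y) = \<bar>norm y - norm x\<bar> / norm x"
    using nx ny by (simp add: abs_mult)
  also have "\<bar>norm y - norm x\<bar> \<le> norm (x - y)"
    by (metis abs_minus_commute norm_triangle_ineq3)
  finally show ?thesis using nx by (simp add: divide_right_mono add_divide_distrib[symmetric]) 
qed

lemma unit_chord:
  assumes "x \<in> sph" "y \<in> sph"
  shows "(norm (x - y))\<^sup>2 = 2 - 2 * (x \<bullet> y)"
  proof -
  have "x \<bullet> x = 1" "y \<bullet> y = 1" using assms by (simp_all add: sph_iff norm_eq_1)
  then show ?thesis by (simp add: power2_norm_eq_inner inner_diff inner_commute)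
qed

lemma inner_abs_le1:
  assumes "x \<in> sph" "y \<in> sph"
  shows "\<bar>x \<bullet> y\<bar> \<le> 1"
  using assms Cauchy_Schwarz_ineq2[of x y] by (simp add: sph_iff)

lemma sdist_bounds:
  assumes "x \<in> sph" "y \<in> sph"
  shows "0 \<le> sdist x y" "sdist x y \<le> pi"
  using inner_abs_le1[OF assms] by (auto simp: sdist_def intro!: arccos_lbound arccos_ubound)

lemma chord_to_arc:
  fixes e :: real
  assumes "e > 0"
  shows "\<exists>d>0. \<forall>x\<in>sph. \<forall>y\<in>(sph::'a::euclidean_space set). norm (x - y) < d \<longrightarrow> sdist x y < e"
proof -
  have "continuous_on {-1..1} arccos" by (rule continuous_on_arccos')
  then obtain d' where d': "d' > 0" "\<And>t. t \<in> {-1..1} \<Longrightarrow> dist t 1 < d' \<Longrightarrow> dist (arccos t) (arccos 1) < e"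
    using assms unfolding continuous_on_iff by (metis atLeastAtMost_iff order.refl neg_le_iff_le zero_le_one one_le_numeral dual_order.trans le_minus_one_simps(1))
  show ?thesis
  proof (intro exI[of _ "min 1 d'"] conjI ballI impI)
    show "0 < min 1 d'" using d' by simp
    fix x y :: 'a assume xy: "x \<in> sph" "y \<in> sph" "norm (x - y) < min 1 d'"
    have n: "norm (x-y) ^2 \<le> norm (x - y)" using xy(3) by (simp add: power2_eq_square mult_left_le)
    have "dist (x \<bullet> y) 1 < d'"
      using unit_chord[OF xy(1,2)] n xy(3) inner_abs_le1[OF xy(1,2)] by (simp add: dist_real_def)
    then have "dist (arccos (x \<bullet> y)) (arccos 1) < e"
      using d'(2)[of "x \<bullet> y"] inner_abs_le1[OF xy(1,2)] by (auto simp: abs_le_iff)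
    then show "sdist x y < e" by (simp add: sdist_def dist_real_def)
  qed
qed

lemma arc_to_chord:
  fixes d :: real
  assumes "d > 0"
  shows "\<exists>e>0. \<forall>x\<in>sph. \<forall>y\<in>(sph::'a::euclidean_space set). sdist x y < e \<longrightarrow> norm (x - y) < d"
proof -
  have c0: "isCont (cos::real\<Rightarrow>real) 0" by (rule isCont_cos)
  have pos: "d\<^sup>2/2 > 0" using assms by simp
  have ex: "\<exists>e>0. \<forall>t::real. dist t 0 < e \<longrightarrow> dist (cos t) (cos 0) < d\<^sup>2 / 2"
    using mp[OF spec[OF c0[unfolded continuous_at_eps_delta], of "d\<^sup>2/2"] pos] .
  then obtain e where e0: "e > 0" and e: "\<forall>t::real. dist t 0 < e \<longrightarrow> dist (cos t) (cos 0) < d\<^sup>2 / 2"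
    by (elim exE conjE)
  show ?thesis
  proof (intro exI[of _ e] conjI ballI impI)
    show "e > 0" by (rule e0)
    fix x y :: 'a assume xy: "x \<in> sph" "y \<in> sph" "sdist x y < e"
    have c: "cos (sdist x y) = x \<bullet> y" using inner_abs_le1[OF xy(1,2)] by (simp add: sdist_def cos_arccos_abs)
    have "dist (sdist x y) 0 < e" using xy(3) sdist_bounds[OF xy(1,2)] by (simp add: dist_real_def)
    then have "dist (cos (sdist x y)) (cos 0) < d\<^sup>2 / 2" using e by blast
    then have "\<bar>x \<bullet> y - 1\<bar> < d\<^sup>2/2" using c by (simp add: dist_real_def)
    then have "1 - x \<bullet> y < d\<^sup>2/2" by linarith
    then have "(norm (x - y))\<^sup>2 < d\<^sup>2" using unit_chord[OF xy(1,2)] by simp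
    then show "norm (x - y) < d" using assms by (simp add: power_less_imp_less_base)
  qed
qed




definition good :: "'a::euclidean_space \<Rightarrow> 'a set \<Rightarrow> bool" where
 "good P W \<longleftrightarrow> W \<subseteq> sph \<and> closed W \<and> P \<in> W \<and> (\<forall>w\<in>W. 0 \<le> P \<bullet> w) \<and>
   (\<forall>a\<in>W. \<forall>b\<in>W. \<forall>s t. 0 \<le> s \<longrightarrow> 0 \<le> t \<longrightarrow> s *\<^sub>R a + t *\<^sub>R b \<noteq> 0 \<longrightarrow> sgn (s *\<^sub>R a + t *\<^sub>R b) \<in> W)"

lemma closed_sph: "closed (sph::'a::euclidean_space set)"
  by (simp add: sph_def)

lemma closed_spolar: "closed (spolar (W::'a::euclidean_space set))"
proof -
  have "spolar W = sph \<inter> (\<Inter>P\<in>W. {Q. P \<bullet> Q \<ge> 0})" by (auto simp: spolar_def)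
  then show ?thesis by (auto intro!: closed_Int closed_INT closed_sph closed_halfspace_ge)
qed

lemma spolar_sub: "spolar W \<subseteq> sph" by (auto simp: spolar_def)

lemma inner_sgn_nonneg:
  fixes w z :: "'a::euclidean_space"
  assumes "0 \<le> w \<bullet> z" shows "0 \<le> w \<bullet> sgn z"
  using assms by (simp add: sgn_div_norm)

lemma good_polar:
  assumes P: "P \<in> sph" and g: "good P W"
  shows "good P (spolar W)"
  unfolding good_def
proof (intro conjI ballI allI impI)
  show "spolar W \<subseteq> sph" by (rule spolar_sub)
  show "closed (spolar W)" by (rule closed_spolar)
  show "P \<in> spolar W" using g P by (auto simp: good_def spolar_def inner_commute)
  show "0 \<le> P \<bullet> w" if "w \<in> spolar W" for w using that g by (auto simp: good_def spolar_def)
  fix a b s t assume ab: "a \<in> spolar W" "b \<in> spolar W" and st: "0 \<le> (s::real)" "0 \<le> (t::real)"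
    and nz: "s *\<^sub>R a + t *\<^sub>R b \<noteq> 0"
  show "sgn (s *\<^sub>R a + t *\<^sub>R b) \<in> spolar W"
    unfolding spolar_def
  proof (intro CollectI conjI ballI)
    show "sgn (s *\<^sub>R a + t *\<^sub>R b) \<in> sph" using nz by (rule sgn_sph)
    fix w assume w: "w \<in> W"
    have "0 \<le> w \<bullet> a" "0 \<le> w \<bullet> b" using ab w by (auto simp: spolar_def)
    then have "0 \<le> w \<bullet> (s *\<^sub>R a + t *\<^sub>R b)" using st by (simp add: inner_add_right)
    then show "0 \<le> w \<bullet> sgn (s *\<^sub>R a + t *\<^sub>R b)" by (rule inner_sgn_nonneg)
  qed
qed

lemma good_convex_cone:
  assumes g: "good P W"
  shows "convex (conic hull W)"
  unfolding convex_alt conic_hull_explicit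
proof (clarsimp)
  fix c d u :: real and x y
  assume h: "0 \<le> c" "x \<in> W" "0 \<le> d" "y \<in> W" "0 \<le> u" "u \<le> 1"
  let ?z = "((1 - u) * c) *\<^sub>R x + (u * d) *\<^sub>R y"
  show "\<exists>c' x'. ?z = c' *\<^sub>R x' \<and> 0 \<le> c' \<and> x' \<in> W"
  proof (cases "?z = 0")
    case True
    then show ?thesis using h by (intro exI[of _ 0] exI[of _ x]) auto
  next
    case False
    have "sgn ?z \<in> W" using g h False unfolding good_def by (auto simp: mult_nonneg_nonneg)
    moreover have "?z = norm ?z *\<^sub>R sgn ?z" using False by (simp add: sgn_div_norm)
    ultimately show ?thesis by (intro exI[of _ "norm ?z"] exI[of _ "sgn ?z"]) auto
  qed
qed

lemma good_compact: "good P W \<Longrightarrow> compact W"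
  unfolding good_def sph_def
  by (meson bounded_sphere bounded_subset compact_eq_bounded_closed)

lemma good_closed_cone: "good P W \<Longrightarrow> closed (conic hull W)"
  apply (rule closed_conic_hull)
  using good_compact[of P W] by (auto simp: good_def sph_iff)

lemma bipolar:
  assumes g: "good P W"
  shows "spolar (spolar W) = W"
proof
  show "W \<subseteq> spolar (spolar W)"
    using g by (auto simp: good_def spolar_def inner_commute)
  show "spolar (spolar W) \<subseteq> W"
  proof
    fix y assume y: "y \<in> spolar (spolar W)"
    then have ysph: "y \<in> sph" by (simp add: spolar_def)
    show "y \<in> W"
    proof (rule ccontr)
      assume yW: "y \<notin> W"
      have "y \<notin> conic hull W"
      proof
        assume "y \<in> conic hull W"
        then obtain c w where cw: "y = c *\<^sub>R w" "0 \<le> c" "w \<in> W" by (auto simp: conic_hull_explicit)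
        have "norm w = 1" using cw g by (auto simp: good_def sph_iff)
        then have "c = 1" using cw ysph by (simp add: sph_iff)
        then show False using cw yW by simp
      qed
      then obtain a b where ab: "a \<bullet> y < b" "\<forall>x\<in>conic hull W. b < a \<bullet> x"
        using separating_hyperplane_closed_point[OF good_convex_cone[OF g] good_closed_cone[OF g]] by blast
      have PW: "P \<in> W" using g by (simp add: good_def)
      have z0: "0 \<in> conic hull W" using PW by auto
      have b0: "b < 0" using ab(2)[rule_format, OF z0] by simp
      have aw: "0 \<le> a \<bullet> w" if w: "w \<in> W" for w
      proof (rule ccontr)
        assume "\<not> 0 \<le> a \<bullet> w"
        then have neg: "a \<bullet> w < 0" by simp
        have "(b / (a \<bullet> w)) *\<^sub>R w \<in> conic hull W"
          using w neg b0 by (auto simp: conic_hull_explicit intro!: exI[of _ "b / (a \<bullet> w)"] divide_nonpos_neg)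
        then have "b < a \<bullet> ((b / (a \<bullet> w)) *\<^sub>R w)" using ab by blast
        then show False using neg by simp
      qed
      have a0: "a \<noteq> 0" using ab b0 by auto
      have "sgn a \<in> spolar W"
        unfolding spolar_def using a0 aw by (auto intro!: sgn_sph inner_sgn_nonneg simp: inner_commute)
      then have "0 \<le> sgn a \<bullet> y" using y by (auto simp: spolar_def)
      moreover have "sgn a \<bullet> y < 0"
      proof -
        have "a \<bullet> y < 0" using ab b0 by linarith
        then show ?thesis using a0 by (simp add: sgn_div_norm mult_pos_neg)
      qed
      ultimately show False by simp
    qed
  qed
qed




lemma wulff_pos:
  assumes "W \<in> HWulff P" "w \<in> W"
  shows "0 < P \<bullet> w"
proof -
  have "w \<in> sph" using assms by (auto simp: HWulff_def Hsets_def)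
  moreover have "w \<notin> hemi (- P)" using assms by (auto simp: HWulff_def)
  ultimately show ?thesis by (auto simp: hemi_def)
qed

lemma sarc_sgn: "sarc A B = {sgn ((1 - t) *\<^sub>R A + t *\<^sub>R B) | t. 0 \<le> t \<and> t \<le> 1}"
  by (simp add: sarc_def sgn_div_norm)

lemma cone_to_sarc:
  fixes a b :: "'a::euclidean_space"
  assumes st: "0 \<le> s" "0 \<le> t" and nz: "s *\<^sub>R a + t *\<^sub>R b \<noteq> 0"
  shows "sgn (s *\<^sub>R a + t *\<^sub>R b) \<in> sarc a b"
proof -
  have stp: "s + t > 0"
  proof (rule ccontr)
    assume "\<not> s + t > 0" then have "s = 0" "t = 0" using st by auto
    then show False using nz by simp
  qed
  define \<tau> where "\<tau> = t / (s + t)"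
  have \<tau>: "0 \<le> \<tau>" "\<tau> \<le> 1" using st stp by (auto simp: \<tau>_def field_simps)
  have "1 - \<tau> = s / (s + t)" using stp by (simp add: \<tau>_def field_simps)
  then have eq: "s *\<^sub>R a + t *\<^sub>R b = (s + t) *\<^sub>R ((1 - \<tau>) *\<^sub>R a + \<tau> *\<^sub>R b)"
    using stp by (simp add: \<tau>_def scaleR_add_right)
  have "sgn (s *\<^sub>R a + t *\<^sub>R b) = sgn ((1 - \<tau>) *\<^sub>R a + \<tau> *\<^sub>R b)"
    unfolding eq using stp by (simp add: sgn_scaleR)
  then show ?thesis using \<tau> unfolding sarc_sgn by blast
qed

lemma wulff_good:
  assumes W: "W \<in> HWulff P"
  shows "good P W"
  unfolding good_def
proof (intro conjI ballI allI impI)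
  show "W \<subseteq> sph" "closed W" using W by (auto simp: HWulff_def Hsets_def)
  show "P \<in> W" using W by (auto simp: HWulff_def sinterior_point_def)
  show "0 \<le> P \<bullet> w" if "w \<in> W" for w using wulff_pos[OF W that] by simp
  fix a b s t assume ab: "a \<in> W" "b \<in> W" and st: "0 \<le> (s::real)" "0 \<le> (t::real)"
    and nz: "s *\<^sub>R a + t *\<^sub>R b \<noteq> 0"
  have "sarc a b \<subseteq> W" using W ab
    by (auto simp: HWulff_def spherical_convex_body_def spherical_convex_def)
  then show "sgn (s *\<^sub>R a + t *\<^sub>R b) \<in> W" using cone_to_sarc[OF st nz] by blast
qed

lemma sqrt_ge_self: "0 \<le> x \<Longrightarrow> x \<le> 1 \<Longrightarrow> x \<le> sqrt (x::real)"
proof -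
  assume h: "0 \<le> x" "x \<le> 1"
  have "sqrt x \<le> 1" "0 \<le> sqrt x" using h by auto
  moreover have "x = sqrt x * sqrt x" using h by simp
  ultimately have "sqrt x * sqrt x \<le> sqrt x * 1" by (intro mult_left_mono)
  then show ?thesis using h by simp
qed

lemma wulff_polar:
  assumes P: "P \<in> sph" and W: "W \<in> HWulff P"
  shows "spolar W \<in> HWulff P"
proof -
  let ?W' = "spolar W"
  have gW: "good P W" by (rule wulff_good[OF W])
  have g': "good P ?W'" by (rule good_polar[OF P gW])
  obtain e where e: "e > 0" "sph \<inter> ball P e \<subseteq> W"
    using W by (auto simp: HWulff_def sinterior_point_def)
  have pos: "0 < P \<bullet> y" if y: "y \<in> ?W'" for y
  proof -
    have y1: "y \<in> sph" "\<forall>w\<in>W. 0 \<le> w \<bullet> y" using y by (auto simp: spolar_def)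
    have ge: "0 \<le> P \<bullet> y" using g' y by (auto simp: good_def)
    show ?thesis
    proof (rule ccontr)
      assume "\<not> 0 < P \<bullet> y"
      then have Py: "P \<bullet> y = 0" using ge by simp
      define b where "b = min (1/2) (e/2)"
      have b: "0 < b" "b \<le> 1/2" "b \<le> e/2" using e by (auto simp: b_def)
      define a where "a = sqrt (1 - b\<^sup>2)"
      have b2': "b\<^sup>2 \<le> (1/2)\<^sup>2" using b by (intro power_mono) auto
      then have b2: "b\<^sup>2 \<le> 1/4" by (simp add: power2_eq_square)
      have a2: "a\<^sup>2 = 1 - b\<^sup>2" using b2 by (simp add: a_def)
      have age: "1 - b\<^sup>2 \<le> a" unfolding a_def using b2 by (intro sqrt_ge_self) (auto)
      define z where "z = a *\<^sub>R P - b *\<^sub>R y"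
      have PP: "P \<bullet> P = 1" and yy: "y \<bullet> y = 1" using P y1 by (simp_all add: sph_iff norm_eq_1)
      have "z \<bullet> z = a\<^sup>2 + b\<^sup>2"
        by (simp add: z_def inner_diff_left inner_diff_right PP yy Py inner_commute[of y P] power2_eq_square)
      then have zs: "z \<in> sph" using a2 by (simp add: sph_iff norm_eq_1)
      have "(P - z) \<bullet> (P - z) = (1 - a)\<^sup>2 + b\<^sup>2"
        by (simp add: z_def inner_diff_left inner_diff_right PP yy Py inner_commute[of y P] power2_eq_square algebra_simps)
      also have "\<dots> = 2 - 2 * a" using a2 by (simp add: power2_eq_square algebra_simps)
      also have "\<dots> \<le> 2 * b\<^sup>2" using age by simp
      also have "\<dots> < e\<^sup>2"
      proof -
        have "b\<^sup>2 \<le> (e/2)\<^sup>2" using b by (intro power_mono) auto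
        then have h: "b * b * 4 \<le> e * e" by (simp add: power2_eq_square)
        have "0 < e * e" using e by simp
        then show ?thesis using h unfolding power2_eq_square by linarith
      qed
      finally have "(norm (P - z))\<^sup>2 < e\<^sup>2" by (simp add: power2_norm_eq_inner)
      then have "norm (P - z) < e" using e by (simp add: power_less_imp_less_base)
      then have "z \<in> W" using e zs by (auto simp: dist_norm)
      then have "0 \<le> z \<bullet> y" using y1 by blast
      moreover have "z \<bullet> y = - b" by (simp add: z_def inner_diff_left Py yy)
      ultimately show False using b by simp
    qed
  qed
  have hemi': "?W' \<inter> hemi (- P) = {}"
  proof (rule ccontr)
    assume "?W' \<inter> hemi (- P) \<noteq> {}"
    then obtain x where x: "x \<in> ?W'" "x \<in> hemi (- P)" by blast
    then have "P \<bullet> x \<le> 0" by (simp add: hemi_def)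
    with pos[OF x(1)] show False by simp
  qed
  have PW': "P \<in> ?W'" using g' by (simp add: good_def)
  have int': "sinterior_point ?W' P"
  proof -
    have cW: "compact W" by (rule good_compact[OF gW])
    have ne: "W \<noteq> {}" using gW by (auto simp: good_def)
    have ct: "continuous_on W (\<lambda>w. P \<bullet> w)" by (rule continuous_on_inner[OF continuous_on_const continuous_on_id])
    from continuous_attains_inf[OF cW ne ct]
    obtain w0 where w0: "w0 \<in> W" "\<forall>w\<in>W. P \<bullet> w0 \<le> P \<bullet> w" by blast
    define m where "m = P \<bullet> w0"
    have m: "m > 0" using wulff_pos[OF W w0(1)] by (simp add: m_def)
    have "sph \<inter> ball P m \<subseteq> ?W'"
    proof
      fix y assume y: "y \<in> sph \<inter> ball P m"
      have "0 \<le> w \<bullet> y" if w: "w \<in> W" for w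
      proof -
        have nw: "norm w = 1" using w gW by (auto simp: good_def sph_iff)
        have "\<bar>w \<bullet> (y - P)\<bar> \<le> norm (y - P)" using Cauchy_Schwarz_ineq2[of w "y - P"] nw by simp
        moreover have "norm (y - P) < m" using y by (simp add: dist_norm norm_minus_commute)
        moreover have "m \<le> w \<bullet> P"
        proof -
          have "m \<le> P \<bullet> w" using w0(2) w unfolding m_def by blast
          moreover have "w \<bullet> P = P \<bullet> w" by (rule inner_commute)
          ultimately show ?thesis by simp
        qed
        moreover have "w \<bullet> y = w \<bullet> P + w \<bullet> (y - P)" by (simp add: inner_diff_right)
        ultimately show ?thesis by linarith
      qed
      then show "y \<in> ?W'" using y by (auto simp: spolar_def)
    qed
    then show ?thesis using PW' m by (auto simp: sinterior_point_def)
  qed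
  have mP: "- P \<in> sph" using P by (simp add: sph_iff)
  have conv': "spherical_convex ?W'"
    unfolding spherical_convex_def hemispherical_def
  proof (intro conjI ballI)
    show "?W' \<subseteq> sph" by (rule spolar_sub)
    show "\<exists>Q\<in>sph. ?W' \<inter> hemi Q = {}" using mP hemi' by blast
    fix a b assume ab: "a \<in> ?W'" "b \<in> ?W'"
    show "sarc a b \<subseteq> ?W'"
    proof
      fix x assume "x \<in> sarc a b"
      then obtain t where t: "0 \<le> t" "t \<le> 1" "x = sgn ((1 - t) *\<^sub>R a + t *\<^sub>R b)"
        unfolding sarc_sgn by blast
      have "0 < P \<bullet> ((1 - t) *\<^sub>R a + t *\<^sub>R b)"
      proof -
        have "0 < P \<bullet> a" "0 < P \<bullet> b" using pos ab by auto
        then show ?thesis using t by (cases "t = 0") (auto simp: inner_add_right intro: add_nonneg_pos add_pos_nonneg)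
      qed
      then have "(1 - t) *\<^sub>R a + t *\<^sub>R b \<noteq> 0" by auto
      then show "x \<in> ?W'" using g' ab t unfolding good_def by auto
    qed
  qed
  show ?thesis
    unfolding HWulff_def Hsets_def spherical_convex_body_def
    using spolar_sub closed_spolar PW' hemi' int' conv' by blast
qed

lemma part2:
  assumes P: "P \<in> sph"
  shows "spolar ` HWulff P = HWulff P"
proof
  show "spolar ` HWulff P \<subseteq> HWulff P" using wulff_polar[OF P] by blast
  show "HWulff P \<subseteq> spolar ` HWulff P"
  proof
    fix W assume W: "W \<in> HWulff P"
    have "W = spolar (spolar W)" using bipolar[OF wulff_good[OF W]] by simp
    then show "W \<in> spolar ` HWulff P" using wulff_polar[OF P W] by blast
  qed
qed




lemma shd_lt:
  assumes AB: "A \<subseteq> sph" "B \<subseteq> sph" "A \<noteq> {}" "B \<noteq> {}" and lt: "shd A B < e"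
  shows "\<forall>x\<in>A. \<exists>y\<in>B. sdist x y < e" "\<forall>y\<in>B. \<exists>x\<in>A. sdist x y < e"
proof -
  have bb1: "bdd_below ((\<lambda>y. sdist x y) ` B)" if "x \<in> A" for x
    using that AB sdist_bounds by (intro bdd_belowI[of _ 0]) blast
  have bb2: "bdd_below ((\<lambda>x. sdist x y) ` A)" if "y \<in> B" for y
    using that AB sdist_bounds by (intro bdd_belowI[of _ 0]) blast
  obtain y0 where y0: "y0 \<in> B" using AB by blast
  obtain x0 where x0: "x0 \<in> A" using AB by blast
  have ba1: "bdd_above ((\<lambda>x. INF y\<in>B. sdist x y) ` A)"
  proof (intro bdd_aboveI[of _ pi])
    fix z assume "z \<in> (\<lambda>x. INF y\<in>B. sdist x y) ` A"
    then obtain x where x: "x \<in> A" "z = (INF y\<in>B. sdist x y)" by blast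
    have "(INF y\<in>B. sdist x y) \<le> sdist x y0" by (rule cINF_lower[OF bb1[OF x(1)] y0])
    also have "\<dots> \<le> pi" using AB x y0 sdist_bounds by blast
    finally show "z \<le> pi" using x by simp
  qed
  have ba2: "bdd_above ((\<lambda>y. INF x\<in>A. sdist x y) ` B)"
  proof (intro bdd_aboveI[of _ pi])
    fix z assume "z \<in> (\<lambda>y. INF x\<in>A. sdist x y) ` B"
    then obtain y where y: "y \<in> B" "z = (INF x\<in>A. sdist x y)" by blast
    have "(INF x\<in>A. sdist x y) \<le> sdist x0 y" by (rule cINF_lower[OF bb2[OF y(1)] x0])
    also have "\<dots> \<le> pi" using AB x0 y sdist_bounds by blast
    finally show "z \<le> pi" using y by simp
  qed
  show "\<forall>x\<in>A. \<exists>y\<in>B. sdist x y < e"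
  proof
    fix x assume x: "x \<in> A"
    have "(INF y\<in>B. sdist x y) \<le> (SUP x\<in>A. INF y\<in>B. sdist x y)" by (rule cSUP_upper[OF x ba1])
    also have "\<dots> \<le> shd A B" by (simp add: shd_def)
    finally have "(INF y\<in>B. sdist x y) < e" using lt by simp
    then show "\<exists>y\<in>B. sdist x y < e" using cINF_less_iff[OF AB(4) bb1[OF x]] by blast
  qed
  show "\<forall>y\<in>B. \<exists>x\<in>A. sdist x y < e"
  proof
    fix y assume y: "y \<in> B"
    have "(INF x\<in>A. sdist x y) \<le> (SUP y\<in>B. INF x\<in>A. sdist x y)" by (rule cSUP_upper[OF y ba2])
    also have "\<dots> \<le> shd A B" by (simp add: shd_def)
    finally have "(INF x\<in>A. sdist x y) < e" using lt by simp
    then show "\<exists>x\<in>A. sdist x y < e" using cINF_less_iff[OF AB(3) bb2[OF y]] by blast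
  qed
qed

lemma shd_le:
  assumes AB: "A \<subseteq> sph" "B \<subseteq> sph" "A \<noteq> {}" "B \<noteq> {}"
    and H1: "\<forall>x\<in>A. \<exists>y\<in>B. sdist x y \<le> d" and H2: "\<forall>y\<in>B. \<exists>x\<in>A. sdist x y \<le> d"
  shows "shd A B \<le> d"
proof -
  have bb1: "bdd_below ((\<lambda>y. sdist x y) ` B)" if "x \<in> A" for x
    using that AB sdist_bounds by (intro bdd_belowI[of _ 0]) blast
  have bb2: "bdd_below ((\<lambda>x. sdist x y) ` A)" if "y \<in> B" for y
    using that AB sdist_bounds by (intro bdd_belowI[of _ 0]) blast
  have "(SUP x\<in>A. INF y\<in>B. sdist x y) \<le> d"
  proof (rule cSUP_least[OF AB(3)])
    fix x assume x: "x \<in> A"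
    then obtain y where "y \<in> B" "sdist x y \<le> d" using H1 by blast
    then show "(INF y\<in>B. sdist x y) \<le> d" using cINF_lower2[OF bb1[OF x]] by blast
  qed
  moreover have "(SUP y\<in>B. INF x\<in>A. sdist x y) \<le> d"
  proof (rule cSUP_least[OF AB(4)])
    fix y assume y: "y \<in> B"
    then obtain x where "x \<in> A" "sdist x y \<le> d" using H2 by blast
    then show "(INF x\<in>A. sdist x y) \<le> d" using cINF_lower2[OF bb2[OF y]] by blast
  qed
  ultimately show ?thesis by (simp add: shd_def)
qed

lemma cl_approx:
  fixes P :: "'a::euclidean_space"
  assumes W: "W \<in> HWulff_cl P" and d: "d > 0"
  shows "\<exists>V\<in>HWulff P. (\<forall>x\<in>W. \<exists>y\<in>V. norm (x - y) < d) \<and> (\<forall>y\<in>V. \<exists>x\<in>W. norm (x - y) < d)"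
proof -
  obtain e where e: "e > 0" "\<forall>x\<in>(sph::'a set). \<forall>y\<in>sph. sdist x y < e \<longrightarrow> norm (x - y) < d"
    using arc_to_chord[OF d] by blast
  obtain V where V: "V \<in> HWulff P" "shd W V < e" using W e by (auto simp: HWulff_cl_def)
  have Ws: "W \<subseteq> sph" "W \<noteq> {}" using W by (auto simp: HWulff_cl_def Hsets_def)
  have Vs: "V \<subseteq> sph" "V \<noteq> {}" using V by (auto simp: HWulff_def Hsets_def)
  note s = shd_lt[OF Ws(1) Vs(1) Ws(2) Vs(2) V(2)]
  show ?thesis
  proof (intro bexI[OF _ V(1)] conjI ballI)
    fix x assume x: "x \<in> W"
    then obtain y where y: "y \<in> V" "sdist x y < e" using s by blast
    have xs: "x \<in> sph" and ys: "y \<in> sph" using x y Ws Vs by auto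
    have "norm (x - y) < d" using e(2)[rule_format, OF xs ys y(2)] .
    then show "\<exists>y\<in>V. norm (x - y) < d" using y by blast
  next
    fix y assume y: "y \<in> V"
    then obtain x where x: "x \<in> W" "sdist x y < e" using s by blast
    have xs: "x \<in> sph" and ys: "y \<in> sph" using x y Ws Vs by auto
    have "norm (x - y) < d" using e(2)[rule_format, OF xs ys x(2)] .
    then show "\<exists>x\<in>W. norm (x - y) < d" using x by blast
  qed
qed

lemma inner_unit_le:
  assumes "P \<in> sph" shows "\<bar>P \<bullet> u\<bar> \<le> norm u"
  using Cauchy_Schwarz_ineq2[of P u] assms by (simp add: sph_iff)

lemma cl_good:
  assumes P: "P \<in> sph" and W: "W \<in> HWulff_cl P"
  shows "good P W"
  unfolding good_def
proof (intro conjI ballI allI impI)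
  show Ws: "W \<subseteq> sph" and cW: "closed W" using W by (auto simp: HWulff_cl_def Hsets_def)
  show "P \<in> W"
    unfolding closed_approachable[OF cW, symmetric]
  proof (intro allI impI)
    fix e :: real assume "e > 0"
    then obtain V where V: "V \<in> HWulff P" "\<forall>y\<in>V. \<exists>x\<in>W. norm (x - y) < e"
      using cl_approx[OF W] by blast
    have "P \<in> V" using V by (auto simp: HWulff_def sinterior_point_def)
    then show "\<exists>y\<in>W. dist y P < e" using V by (auto simp: dist_norm)
  qed
  show "0 \<le> P \<bullet> w" if w: "w \<in> W" for w
  proof (rule ccontr)
    assume "\<not> 0 \<le> P \<bullet> w"
    then have d: "- (P \<bullet> w) > 0" by simp
    then obtain V where V: "V \<in> HWulff P" "\<forall>x\<in>W. \<exists>y\<in>V. norm (x - y) < - (P \<bullet> w)"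
      using cl_approx[OF W] by blast
    then obtain v where v: "v \<in> V" "norm (w - v) < - (P \<bullet> w)" using w by blast
    have "0 < P \<bullet> v" by (rule wulff_pos[OF V(1) v(1)])
    moreover have "\<bar>P \<bullet> (w - v)\<bar> \<le> norm (w - v)" by (rule inner_unit_le[OF P])
    moreover have "P \<bullet> w = P \<bullet> v + P \<bullet> (w - v)" by (simp add: inner_diff_right)
    ultimately show False using v by linarith
  qed
  fix a b s t assume ab: "a \<in> W" "b \<in> W" and st: "0 \<le> (s::real)" "0 \<le> (t::real)"
    and nz: "s *\<^sub>R a + t *\<^sub>R b \<noteq> 0"
  define z where "z = s *\<^sub>R a + t *\<^sub>R b"
  have nzp: "norm z > 0" using nz by (simp add: z_def)
  show "sgn (s *\<^sub>R a + t *\<^sub>R b) \<in> W"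
    unfolding z_def[symmetric] closed_approachable[OF cW, symmetric]
  proof (intro allI impI)
    fix \<eta> :: real assume \<eta>: "\<eta> > 0"
    define M where "M = s + t"
    have M: "0 \<le> M" using st by (simp add: M_def)
    define \<theta> where "\<theta> = min \<eta> 1"
    have \<theta>: "0 < \<theta>" "\<theta> \<le> \<eta>" "\<theta> \<le> 1" using \<eta> by (auto simp: \<theta>_def)
    define \<delta> where "\<delta> = norm z * \<theta> / (4 * (M + 1))"
    have \<delta>: "0 < \<delta>" using nzp \<theta> M by (simp add: \<delta>_def)
    have M\<delta>: "M * \<delta> < norm z * \<theta> / 4"
    proof -
      have "M * \<delta> = (norm z * \<theta> / 4) * (M / (M + 1))" using M by (simp add: \<delta>_def field_simps)
      also have "\<dots> < (norm z * \<theta> / 4) * 1"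
        using M nzp \<theta> by (intro mult_strict_left_mono) (auto simp: field_simps)
      finally show ?thesis by simp
    qed
    define d where "d = min \<delta> (\<eta>/2)"
    have d: "0 < d" "d \<le> \<delta>" "d \<le> \<eta>/2" using \<delta> \<eta> by (auto simp: d_def)
    obtain V where V: "V \<in> HWulff P" "\<forall>x\<in>W. \<exists>y\<in>V. norm (x - y) < d" "\<forall>y\<in>V. \<exists>x\<in>W. norm (x - y) < d"
      using cl_approx[OF W d(1)] by blast
    obtain v1 where v1: "v1 \<in> V" "norm (a - v1) < d" using V ab by blast
    obtain v2 where v2: "v2 \<in> V" "norm (b - v2) < d" using V ab by blast
    define z' where "z' = s *\<^sub>R v1 + t *\<^sub>R v2"
    have "z - z' = s *\<^sub>R (a - v1) + t *\<^sub>R (b - v2)" by (simp add: z_def z'_def algebra_simps)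
    then have "norm (z - z') \<le> s * norm (a - v1) + t * norm (b - v2)"
      using st by (metis norm_triangle_ineq norm_scaleR abs_of_nonneg order_trans order.refl)
    also have "\<dots> \<le> s * d + t * d" using st v1 v2 by (intro add_mono mult_left_mono) auto
    also have "\<dots> \<le> M * \<delta>" using st d M by (simp add: M_def distrib_right[symmetric] mult_left_mono)
    finally have zz: "norm (z - z') < norm z * \<theta> / 4" using M\<delta> by linarith
    have "z' \<noteq> 0"
    proof
      assume "z' = 0"
      then have "norm z < norm z * \<theta> / 4" using zz by simp
      moreover have "norm z * \<theta> / 4 \<le> norm z" using nzp \<theta> by (simp add: mult_left_le)
      ultimately show False by simp
    qed
    then have sz': "sgn z' \<in> V" using wulff_good[OF V(1)] v1 v2 st unfolding good_def z'_def by blast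
    obtain w where w: "w \<in> W" "norm (w - sgn z') < d" using V sz' by blast
    have "norm (sgn z - sgn z') \<le> 2 * norm (z - z') / norm z" using nzp by (intro sgn_diff) auto
    also have "\<dots> < 2 * (norm z * \<theta> / 4) / norm z" using zz nzp by (intro divide_strict_right_mono) (auto simp: mult.commute)
    also have "\<dots> = \<theta> / 2" using nzp by simp
    finally have "norm (sgn z - sgn z') < \<eta> / 2" using \<theta> by simp
    moreover have "norm (w - sgn z) \<le> norm (w - sgn z') + norm (sgn z' - sgn z)"
      using norm_triangle_ineq[of "w - sgn z'" "sgn z' - sgn z"] by simp
    moreover have "norm (sgn z' - sgn z) = norm (sgn z - sgn z')" by (rule norm_minus_commute)
    ultimately have "norm (w - sgn z) < \<eta>" using w d by linarith
    then show "\<exists>y\<in>W. dist y (sgn z) < \<eta>" using w by (auto simp: dist_norm)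
  qed
qed




lemma scale_mem:
  fixes z :: "'a::euclidean_space"
  assumes nz: "z \<noteq> 0" and h1: "infdist z K \<le> \<beta> * (P \<bullet> z)" and h2: "\<sigma> \<le> P \<bullet> z"
    and nrm: "norm z \<le> 1" and K: "conic K" "closed K" "K \<noteq> {}" and \<sigma>: "0 \<le> \<sigma>"
  shows "infdist (sgn z) K \<le> \<beta> * (P \<bullet> sgn z) \<and> \<sigma> \<le> P \<bullet> sgn z"
proof -
  obtain k where k: "k \<in> K" "infdist z K = dist z k" using infdist_attains_inf[OF K(2,3)] by blast
  define c where "c = inverse (norm z)"
  have c: "c > 0" "1 \<le> c" using nz nrm by (auto simp: c_def one_le_inverse)
  have sz: "sgn z = c *\<^sub>R z" by (simp add: c_def sgn_div_norm)
  have ck: "c *\<^sub>R k \<in> K" using K(1) k(1) c by (simp add: conic_mul)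
  have "infdist (sgn z) K \<le> dist (c *\<^sub>R z) (c *\<^sub>R k)" using infdist_le[OF ck] sz by simp
  also have "\<dots> = c * dist z k" using c by (simp add: dist_norm scaleR_diff_right[symmetric])
  also have "\<dots> \<le> c * (\<beta> * (P \<bullet> z))" using k h1 c by (intro mult_left_mono) auto
  also have "\<dots> = \<beta> * (P \<bullet> sgn z)" by (simp add: sz)
  finally have A: "infdist (sgn z) K \<le> \<beta> * (P \<bullet> sgn z)" .
  have "0 \<le> P \<bullet> z" using h2 \<sigma> by simp
  then have "P \<bullet> z \<le> c * (P \<bullet> z)" using c by (simp add: mult_le_cancel_right1)
  then have "\<sigma> \<le> P \<bullet> sgn z" using h2 by (simp add: sz)
  with A show ?thesis by simp
qed

lemma good_cl:
  fixes P :: "'a::euclidean_space"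
  assumes P: "P \<in> sph" and g: "good P W"
  shows "W \<in> HWulff_cl P"
proof -
  have Ws: "W \<subseteq> sph" "W \<noteq> {}" "closed W" using g by (auto simp: good_def)
  have PW: "P \<in> W" using g by (simp add: good_def)
  have WH: "W \<in> Hsets" using Ws by (simp add: Hsets_def)
  define K where "K = conic hull W"
  have Kc: "closed K" using good_closed_cone[OF g] by (simp add: K_def)
  have Kv: "convex K" using good_convex_cone[OF g] by (simp add: K_def)
  have Kn: "conic K" by (simp add: K_def conic_conic_hull)
  have WK: "W \<subseteq> K" by (simp add: K_def hull_subset)
  have PK: "P \<in> K" using WK PW by blast
  have Kne: "K \<noteq> {}" using PK by blast
  have Kadd: "x + y \<in> K" if "x \<in> K" "y \<in> K" for x y
  proof -
    have "(1/2) *\<^sub>R x + (1/2) *\<^sub>R y \<in> K" using Kv that by (intro convexD) auto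
    then have "2 *\<^sub>R ((1/2) *\<^sub>R x + (1/2) *\<^sub>R y) \<in> K" using Kn by (intro conic_mul) auto
    then show ?thesis by (simp add: scaleR_add_right)
  qed
  have PP: "P \<bullet> P = 1" using P by (simp add: sph_iff norm_eq_1)
  have unit_inner: "P \<bullet> v \<le> 1" if "v \<in> sph" for v
    using inner_unit_le[OF P, of v] that by (simp add: sph_iff)
  show ?thesis
    unfolding HWulff_cl_def
  proof (intro CollectI conjI WH allI impI)
    fix e :: real assume e: "e > 0"
    obtain d where d: "d > 0" "\<forall>x\<in>(sph::'a set). \<forall>y\<in>sph. norm (x - y) < d \<longrightarrow> sdist x y < e/2"
      using chord_to_arc[of "e/2"] e by auto
    define \<beta> where "\<beta> = min (1/2) (d/4)"
    have \<beta>: "0 < \<beta>" "\<beta> \<le> 1/2" "\<beta> \<le> d/4" using d by (auto simp: \<beta>_def)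
    define \<sigma> where "\<sigma> = \<beta> / (1 + \<beta>)"
    have \<sigma>: "0 < \<sigma>" "\<sigma> \<le> \<beta>" using \<beta> by (auto simp: \<sigma>_def field_simps)
    define V where "V = {v \<in> sph. infdist v K \<le> \<beta> * (P \<bullet> v) \<and> \<sigma> \<le> P \<bullet> v}"
    have Vs: "V \<subseteq> sph" by (auto simp: V_def)
    have PV: "P \<in> V" using P PK PP \<beta> \<sigma> by (auto simp: V_def)
    have Vpos: "0 < P \<bullet> v" if "v \<in> V" for v using that \<sigma> by (auto simp: V_def)
    have Vc: "closed V"
    proof -
      have "V = sph \<inter> {v. infdist v K \<le> \<beta> * (P \<bullet> v)} \<inter> {v. \<sigma> \<le> P \<bullet> v}" by (auto simp: V_def)
      moreover have "closed {v. infdist v K \<le> \<beta> * (P \<bullet> v)}"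
        by (intro closed_Collect_le continuous_intros)
      moreover have "closed {v. \<sigma> \<le> P \<bullet> v}"
        by (intro closed_Collect_le continuous_intros)
      ultimately show ?thesis using closed_sph by auto
    qed
    have Vint: "sinterior_point V P"
      unfolding sinterior_point_def
    proof (intro conjI exI[of _ "min 1 (\<beta>/2)"])
      show "P \<in> V" by (rule PV)
      show "0 < min 1 (\<beta>/2)" using \<beta> by simp
      show "sph \<inter> ball P (min 1 (\<beta> / 2)) \<subseteq> V"
      proof
        fix v assume v: "v \<in> sph \<inter> ball P (min 1 (\<beta> / 2))"
        have vs: "v \<in> sph" and nd: "norm (P - v) < min 1 (\<beta>/2)" using v by (auto simp: dist_norm)
        have "(norm (P - v))\<^sup>2 \<le> norm (P - v)" using nd by (simp add: power2_eq_square mult_left_le)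
        then have Pv: "1/2 \<le> P \<bullet> v" using unit_chord[OF P vs] nd by simp
        have "infdist v K \<le> dist v P" by (rule infdist_le[OF PK])
        also have "\<dots> < \<beta>/2" using nd by (simp add: dist_norm norm_minus_commute)
        also have "\<beta>/2 \<le> \<beta> * (P \<bullet> v)" using mult_left_mono[OF Pv, of \<beta>] \<beta> by simp
        finally show "v \<in> V" using vs Pv \<sigma> \<beta> by (auto simp: V_def)
      qed
    qed
    have Vsarc: "sarc a b \<subseteq> V" if ab: "a \<in> V" "b \<in> V" for a b
    proof
      fix x assume "x \<in> sarc a b"
      then obtain t where t: "0 \<le> t" "t \<le> 1" "x = sgn ((1 - t) *\<^sub>R a + t *\<^sub>R b)"
        unfolding sarc_sgn by blast
      define z where "z = (1 - t) *\<^sub>R a + t *\<^sub>R b"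
      obtain ka where ka: "ka \<in> K" "infdist a K = dist a ka" using infdist_attains_inf[OF Kc Kne] by blast
      obtain kb where kb: "kb \<in> K" "infdist b K = dist b kb" using infdist_attains_inf[OF Kc Kne] by blast
      have kK: "(1 - t) *\<^sub>R ka + t *\<^sub>R kb \<in> K" using Kv ka kb t by (intro convexD) auto
      have aV: "a \<in> sph" "dist a ka \<le> \<beta> * (P \<bullet> a)" "\<sigma> \<le> P \<bullet> a" using ab(1) ka by (auto simp: V_def)
      have bV: "b \<in> sph" "dist b kb \<le> \<beta> * (P \<bullet> b)" "\<sigma> \<le> P \<bullet> b" using ab(2) kb by (auto simp: V_def)
      have "z - ((1 - t) *\<^sub>R ka + t *\<^sub>R kb) = (1 - t) *\<^sub>R (a - ka) + t *\<^sub>R (b - kb)"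
        by (simp add: z_def algebra_simps)
      then have "dist z ((1 - t) *\<^sub>R ka + t *\<^sub>R kb) \<le> (1 - t) * dist a ka + t * dist b kb"
        using t by (simp add: dist_norm) (metis norm_triangle_ineq norm_scaleR abs_of_nonneg diff_ge_0_iff_ge)
      also have "\<dots> \<le> (1 - t) * (\<beta> * (P \<bullet> a)) + t * (\<beta> * (P \<bullet> b))"
        using aV bV t by (intro add_mono mult_left_mono) auto
      also have "\<dots> = \<beta> * (P \<bullet> z)" by (simp add: z_def inner_add_right algebra_simps)
      finally have d1: "infdist z K \<le> \<beta> * (P \<bullet> z)" using infdist_le[OF kK, of z] by linarith
      have "(1 - t) * \<sigma> + t * \<sigma> \<le> (1 - t) * (P \<bullet> a) + t * (P \<bullet> b)"
        using aV bV t by (intro add_mono mult_left_mono) auto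
      then have d2: "\<sigma> \<le> P \<bullet> z" by (simp add: z_def inner_add_right algebra_simps)
      have "norm z \<le> (1 - t) * norm a + t * norm b"
        using t by (simp add: z_def) (metis norm_triangle_ineq norm_scaleR abs_of_nonneg diff_ge_0_iff_ge)
      then have nz1: "norm z \<le> 1" using aV bV by (simp add: sph_iff)
      have nz: "z \<noteq> 0" using d2 \<sigma> by auto
      have "infdist (sgn z) K \<le> \<beta> * (P \<bullet> sgn z) \<and> \<sigma> \<le> P \<bullet> sgn z"
        by (rule scale_mem[OF nz d1 d2 nz1 Kn Kc Kne]) (use \<sigma> in simp)
      then show "x \<in> V" using t(3) sgn_sph[OF nz] by (simp add: V_def z_def)
    qed
    have mP: "- P \<in> sph" using P by (simp add: sph_iff)
    have Vhemi: "V \<inter> hemi (- P) = {}"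
    proof (rule ccontr)
      assume "V \<inter> hemi (- P) \<noteq> {}"
      then obtain x where x: "x \<in> V" "x \<in> hemi (- P)" by blast
      then have "P \<bullet> x \<le> 0" by (simp add: hemi_def)
      with Vpos[OF x(1)] show False by simp
    qed
    have VW: "V \<in> HWulff P"
      unfolding HWulff_def Hsets_def spherical_convex_body_def spherical_convex_def hemispherical_def
      using Vs PV Vc Vint Vsarc Vhemi mP by blast
    have H1: "\<forall>w\<in>W. \<exists>v\<in>V. norm (w - v) \<le> 2 * \<beta>"
    proof
      fix w assume w: "w \<in> W"
      have ws: "norm w = 1" using w Ws by (auto simp: sph_iff)
      define u where "u = w + \<beta> *\<^sub>R P"
      have uK: "u \<in> K" unfolding u_def using w WK PK Kn \<beta> by (intro Kadd conic_mul) auto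
      have Pw: "0 \<le> P \<bullet> w" using g w by (auto simp: good_def)
      have Pu: "\<beta> \<le> P \<bullet> u" using Pw PP by (simp add: u_def inner_add_right)
      have nu: "norm u \<le> 1 + \<beta>" unfolding u_def using ws \<beta> P
        by (metis norm_triangle_ineq norm_scaleR abs_of_pos sph_iff mult.right_neutral)
      have u0: "u \<noteq> 0" using Pu \<beta> by auto
      have nup: "norm u > 0" using u0 by simp
      define v where "v = sgn u"
      have vK: "v \<in> K" unfolding v_def sgn_div_norm using Kn uK by (simp add: conic_mul)
      have Pv: "P \<bullet> v = (P \<bullet> u) / norm u" by (simp add: v_def sgn_div_norm divide_inverse mult.commute)
      have "\<beta> / (1 + \<beta>) \<le> \<beta> / norm u" using nup nu \<beta> by (intro divide_left_mono) auto
      also have "\<dots> \<le> (P \<bullet> u) / norm u" using Pu nup by (intro divide_right_mono) auto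
      finally have sv: "\<sigma> \<le> P \<bullet> v" by (simp add: \<sigma>_def Pv)
      have "v \<in> V" using vK sv \<sigma> \<beta> sgn_sph[OF u0] by (auto simp: V_def v_def)
      moreover have "norm (w - v) \<le> 2 * \<beta>"
      proof -
        have "sgn w = w" using ws by (simp add: sgn_div_norm)
        then have "norm (w - v) = norm (sgn w - sgn u)" by (simp add: v_def)
        also have "\<dots> \<le> 2 * norm (w - u) / norm w" using ws by (intro sgn_diff) auto
        also have "\<dots> = 2 * \<beta>" using ws \<beta> P by (simp add: u_def sph_iff)
        finally show ?thesis .
      qed
      ultimately show "\<exists>v\<in>V. norm (w - v) \<le> 2 * \<beta>" by blast
    qed
    have H2: "\<forall>v\<in>V. \<exists>w\<in>W. norm (w - v) \<le> 2 * \<beta>"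
    proof
      fix v assume v: "v \<in> V"
      have vs: "v \<in> sph" using v by (simp add: V_def)
      have nv: "norm v = 1" using vs by (simp add: sph_iff)
      obtain k where k: "k \<in> K" "infdist v K = dist v k" using infdist_attains_inf[OF Kc Kne] by blast
      have "dist v k \<le> \<beta> * (P \<bullet> v)" using v k by (simp add: V_def)
      also have "\<dots> \<le> \<beta>" using unit_inner[OF vs] \<beta> by (simp add: mult_left_le)
      finally have dk: "dist v k \<le> \<beta>" .
      obtain c w where cw: "k = c *\<^sub>R w" "0 \<le> c" "w \<in> W" using k(1) by (auto simp: K_def conic_hull_explicit)
      have nw: "norm w = 1" using cw Ws by (auto simp: sph_iff)
      have "c \<noteq> 0"
      proof
        assume "c = 0"
        then have "dist v k = 1" using cw nv by simp
        then show False using dk \<beta> by simp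
      qed
      then have cpos: "c > 0" using cw by simp
      have sk: "sgn k = w" using cw cpos nw by (simp add: sgn_scaleR sgn_div_norm)
      have sv: "sgn v = v" using nv by (simp add: sgn_div_norm)
      have "norm (w - v) = norm (sgn v - sgn k)" using sk sv by (simp add: norm_minus_commute)
      also have "\<dots> \<le> 2 * norm (v - k) / norm v" using nv by (intro sgn_diff) auto
      also have "\<dots> \<le> 2 * \<beta>" using dk nv by (simp add: dist_norm)
      finally show "\<exists>w\<in>W. norm (w - v) \<le> 2 * \<beta>" using cw by blast
    qed
    have Vne: "V \<noteq> {}" using PV by blast
    have "shd W V \<le> e/2"
    proof (rule shd_le[OF Ws(1) Vs Ws(2) Vne])
      show "\<forall>x\<in>W. \<exists>y\<in>V. sdist x y \<le> e / 2"
      proof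
        fix x assume x: "x \<in> W"
        then obtain y where y: "y \<in> V" "norm (x - y) \<le> 2 * \<beta>" using H1 by blast
        have "norm (x - y) < d" using y \<beta> d by linarith
        have xs: "x \<in> sph" and ys: "y \<in> sph" using x y Ws Vs by auto
        have "sdist x y < e/2" using d(2)[rule_format, OF xs ys] \<open>norm (x - y) < d\<close> by blast
        then show "\<exists>y\<in>V. sdist x y \<le> e / 2" using y by force
      qed
      show "\<forall>y\<in>V. \<exists>x\<in>W. sdist x y \<le> e / 2"
      proof
        fix y assume y: "y \<in> V"
        then obtain x where x: "x \<in> W" "norm (x - y) \<le> 2 * \<beta>" using H2 by blast
        have "norm (x - y) < d" using x \<beta> d by linarith
        have xs: "x \<in> sph" and ys: "y \<in> sph" using x y Ws Vs by auto
        have "sdist x y < e/2" using d(2)[rule_format, OF xs ys] \<open>norm (x - y) < d\<close> by blast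
        then show "\<exists>x\<in>W. sdist x y \<le> e / 2" using x by force
      qed
    qed
    then have "shd W V < e" using e by linarith
    then show "\<exists>V\<in>HWulff P. shd W V < e" using VW by blast
  qed
qed

theorem proposition2:
  fixes P :: "'a::euclidean_space"
  assumes "DIM('a) \<ge> 2"
    and "P \<in> sph"
  shows "HWulff_cl P \<subseteq> Hcirc
     \<and> spolar ` HWulff P = HWulff P
     \<and> spolar ` HWulff_cl P = HWulff_cl P
     \<and> inj_on spolar (HWulff_cl P)"
proof (intro conjI)
  note P = assms(2)
  show "HWulff_cl P \<subseteq> Hcirc"
  proof
    fix W assume W: "W \<in> HWulff_cl P"
    have g: "good P W" by (rule cl_good[OF P W])
    have "P \<in> spolar W" using good_polar[OF P g] by (simp add: good_def)
    then show "W \<in> Hcirc" using W by (auto simp: Hcirc_def HWulff_cl_def)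
  qed
  show "spolar ` HWulff P = HWulff P" by (rule part2[OF P])
  have clpol: "spolar W \<in> HWulff_cl P" if "W \<in> HWulff_cl P" for W
    using good_cl[OF P good_polar[OF P cl_good[OF P that]]] .
  show "spolar ` HWulff_cl P = HWulff_cl P"
  proof
    show "spolar ` HWulff_cl P \<subseteq> HWulff_cl P" using clpol by blast
    show "HWulff_cl P \<subseteq> spolar ` HWulff_cl P"
    proof
      fix W assume W: "W \<in> HWulff_cl P"
      have "W = spolar (spolar W)" using bipolar[OF cl_good[OF P W]] by simp
      then show "W \<in> spolar ` HWulff_cl P" using clpol[OF W] by blast
    qed
  qed
  show "inj_on spolar (HWulff_cl P)"
  proof (rule inj_onI)
    fix W1 W2 assume W: "W1 \<in> HWulff_cl P" "W2 \<in> HWulff_cl P" and eq: "spolar W1 = spolar W2"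
    have "W1 = spolar (spolar W1)" using bipolar[OF cl_good[OF P W(1)]] by simp
    also have "\<dots> = spolar (spolar W2)" using eq by simp
    also have "\<dots> = W2" using bipolar[OF cl_good[OF P W(2)]] by simp
    finally show "W1 = W2" .
  qed
qed


end
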